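(* Let $L$ be a distributive lattice with generated Boolean algebra $B$, $n\ge1$, $a_i,b_i\in L$ with $a_i<b_i$ for $i\in[n]$, $\widehat{\mathbf e}_I\in L^n$ ($I\subseteq[n]$) the tuple with $i$-th component $b_i$ if $i\in I$ and $a_i$ otherwise, $D=\{\widehat{\mathbf e}_I:I\subseteq[n]\}$, and $f\colon D\to L$ monotone and satisfying $$f(\widehat{\mathbf e}_{I\cup\{k\}})\wedge a_k\le f(\widehat{\mathbf e}_I)\le f(\widehat{\mathbf e}_{I\setminus\{k\}})\vee b_k\quad\text{for all } I\subseteq[n],\ k\in[n].$$ Then $p^-(\widehat{\mathbf e}_J)\ge f(\widehat{\mathbf e}_J)$ for all $J\subseteq[n]$.
   Context: $B$ is the Boolean algebra generated by $L$ (with $L$ embedded), with complement $x\mapsto x'$. $f$ monotone means $I\subseteq J\Rightarrow f(\widehat{\mathbf e}_I)\le f(\widehat{\mathbf e}_J)$. Define $c_I^-=f(\widehat{\mathbf e}_I)\wedge\bigwedge_{i\notin I}a_i'\in B$ and $p^-(\mathbf x)=\bigvee_{I\subseteq[n]}(c_I^-\wedge\bigwedge_{i\in I}x_i)$, a polynomial function over $B$. *)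

theory Defs
  imports Main
begin

inductive_set bool_gen :: "'b::boolean_algebra set \<Rightarrow> 'b set" for L where
  base: "x \<in> L \<Longrightarrow> x \<in> bool_gen L"
| bot: "bot \<in> bool_gen L"
| top: "top \<in> bool_gen L"
| compl: "x \<in> bool_gen L \<Longrightarrow> - x \<in> bool_gen L"
| inf: "x \<in> bool_gen L \<Longrightarrow> y \<in> bool_gen L \<Longrightarrow> inf x y \<in> bool_gen L"
| sup: "x \<in> bool_gen L \<Longrightarrow> y \<in> bool_gen L \<Longrightarrow> sup x y \<in> bool_gen L"

definition big_meet :: "'i set \<Rightarrow> ('i \<Rightarrow> 'b::boolean_algebra) \<Rightarrow> 'b" where
  "big_meet A g = Finite_Set.fold (\<lambda>i acc. inf (g i) acc) top A"

definition big_join :: "'i set \<Rightarrow> ('i \<Rightarrow> 'b::boolean_algebra) \<Rightarrow> 'b" where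
  "big_join A g = Finite_Set.fold (\<lambda>i acc. sup (g i) acc) bot A"

definition ehat :: "(nat \<Rightarrow> 'b) \<Rightarrow> (nat \<Rightarrow> 'b) \<Rightarrow> nat set \<Rightarrow> (nat \<Rightarrow> 'b)" where
  "ehat a b I = (\<lambda>i. if i \<in> I then b i else a i)"

definition cminus :: "nat \<Rightarrow> (nat \<Rightarrow> 'b::boolean_algebra) \<Rightarrow> (nat \<Rightarrow> 'b) \<Rightarrow> ((nat \<Rightarrow> 'b) \<Rightarrow> 'b) \<Rightarrow> nat set \<Rightarrow> 'b" where
  "cminus n a b f I = inf (f (ehat a b I)) (big_meet ({1..n} - I) (\<lambda>i. - a i))"

definition pminus :: "nat \<Rightarrow> (nat \<Rightarrow> 'b::boolean_algebra) \<Rightarrow> (nat \<Rightarrow> 'b) \<Rightarrow> ((nat \<Rightarrow> 'b) \<Rightarrow> 'b) \<Rightarrow> (nat \<Rightarrow> 'b) \<Rightarrow> 'b" where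
  "pminus n a b f x = big_join (Pow {1..n}) (\<lambda>I. inf (cminus n a b f I) (big_meet I x))"

end

theory Submission
  imports Defs
begin

lemma bm_cfc: "comp_fun_commute (\<lambda>i acc. inf (g i) acc :: 'b::boolean_algebra)"
  by unfold_locales (simp add: fun_eq_iff inf_left_commute)

lemma bj_cfc: "comp_fun_commute (\<lambda>i acc. sup (g i) acc :: 'b::boolean_algebra)"
  by unfold_locales (simp add: fun_eq_iff sup_left_commute)

lemma big_meet_ge:
  assumes "finite A" "\<And>i. i \<in> A \<Longrightarrow> x \<le> g i"
  shows "x \<le> big_meet A g"
  using assms
proof (induction A rule: finite_induct)
  case empty then show ?case unfolding big_meet_def by simp
next
  case (insert i A)
  have eq: "big_meet (insert i A) g = inf (g i) (big_meet A g)"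
    unfolding big_meet_def
    by (rule comp_fun_commute_on.fold_insert[OF bm_cfc[unfolded comp_fun_commute_def']])
       (use insert.hyps in simp_all)
  have 1: "x \<le> g i" using insert.prems by simp
  have 2: "x \<le> big_meet A g" using insert.IH insert.prems by simp
  show ?case unfolding eq using 1 2 by (rule le_infI)
qed

lemma big_join_ge:
  assumes "finite A" "i \<in> A"
  shows "g i \<le> big_join A g"
  using assms
proof (induction A rule: finite_induct)
  case empty then show ?case by simp
next
  case (insert j A)
  have eq: "big_join (insert j A) g = sup (g j) (big_join A g)"
    unfolding big_join_def
    by (rule comp_fun_commute_on.fold_insert[OF bj_cfc[unfolded comp_fun_commute_def']])
       (use insert.hyps in simp_all)
  show ?case
  proof (cases "i = j")
    case True then show ?thesis unfolding eq by simp
  next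
    case False
    then have "g i \<le> big_join A g" using insert.IH insert.prems by simp
    then show ?thesis unfolding eq by (rule le_supI2)
  qed
qed

lemma decide_split:
  fixes y :: "'b::boolean_algebra"
  assumes "finite C"
  shows "\<forall>z. (\<forall>x. x \<le> z \<longrightarrow> (\<forall>c\<in>C. x \<le> c \<or> x \<le> - c) \<longrightarrow> x \<le> y) \<longrightarrow> z \<le> y"
  using assms
proof (induction C rule: finite_induct)
  case empty then show ?case using order_refl by blast
next
  case (insert c C)
  show ?case
  proof (intro allI impI)
    fix z assume H: "\<forall>x. x \<le> z \<longrightarrow> (\<forall>c'\<in>insert c C. x \<le> c' \<or> x \<le> - c') \<longrightarrow> x \<le> y"
    have 1: "inf z c \<le> y"
    proof (rule insert.IH[THEN spec, THEN mp], intro allI impI)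
      fix x assume x: "x \<le> inf z c" "\<forall>c'\<in>C. x \<le> c' \<or> x \<le> - c'"
      then have xz: "x \<le> z" and xc: "x \<le> c" by simp_all
      have "\<forall>c'\<in>insert c C. x \<le> c' \<or> x \<le> - c'" using x(2) xc by blast
      then show "x \<le> y" using H xz by blast
    qed
    have 2: "inf z (- c) \<le> y"
    proof (rule insert.IH[THEN spec, THEN mp], intro allI impI)
      fix x assume x: "x \<le> inf z (- c)" "\<forall>c'\<in>C. x \<le> c' \<or> x \<le> - c'"
      then have xz: "x \<le> z" and xc: "x \<le> - c" by simp_all
      have "\<forall>c'\<in>insert c C. x \<le> c' \<or> x \<le> - c'" using x(2) xc by blast
      then show "x \<le> y" using H xz by blast
    qed
    have eq: "z = sup (inf z c) (inf z (- c))"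
    proof -
      have "sup (inf z c) (inf z (- c)) = inf z (sup c (- c))" by (rule inf_sup_distrib1[symmetric])
      then show ?thesis by simp
    qed
    show "z \<le> y" using eq sup_least[OF 1 2] by (rule ord_eq_le_trans)
  qed
qed

theorem lemma3p4:
  fixes L :: "'b::boolean_algebra set" and n :: nat
    and a b :: "nat \<Rightarrow> 'b" and f :: "(nat \<Rightarrow> 'b) \<Rightarrow> 'b"
  assumes L_inf: "\<And>x y. x \<in> L \<Longrightarrow> y \<in> L \<Longrightarrow> inf x y \<in> L"
    and L_sup: "\<And>x y. x \<in> L \<Longrightarrow> y \<in> L \<Longrightarrow> sup x y \<in> L"
    and B_gen: "bool_gen L = UNIV"
    and n_pos: "n \<ge> 1"
    and a_L: "\<And>i. i \<in> {1..n} \<Longrightarrow> a i \<in> L"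
    and b_L: "\<And>i. i \<in> {1..n} \<Longrightarrow> b i \<in> L"
    and ab: "\<And>i. i \<in> {1..n} \<Longrightarrow> a i < b i"
    and f_L: "\<And>I. I \<subseteq> {1..n} \<Longrightarrow> f (ehat a b I) \<in> L"
    and f_mono: "\<And>I J. I \<subseteq> J \<Longrightarrow> J \<subseteq> {1..n} \<Longrightarrow> f (ehat a b I) \<le> f (ehat a b J)"
    and f_cond: "\<And>I k. I \<subseteq> {1..n} \<Longrightarrow> k \<in> {1..n} \<Longrightarrow>
        inf (f (ehat a b (I \<union> {k}))) (a k) \<le> f (ehat a b I)
      \<and> f (ehat a b I) \<le> sup (f (ehat a b (I - {k}))) (b k)"
  shows "\<forall>J. J \<subseteq> {1..n} \<longrightarrow> f (ehat a b J) \<le> pminus n a b f (ehat a b J)"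
proof (intro allI impI)
  fix J assume J: "J \<subseteq> {1..n}"
  let ?P = "pminus n a b f (ehat a b J)"
  let ?C = "a ` {1..n} \<union> b ` {1..n}"
  have key: "x \<le> sup (- f (ehat a b J)) ?P" if dec: "\<forall>c\<in>?C. x \<le> c \<or> x \<le> - c" for x
  proof -
    define K where "K = {i\<in>{1..n}. x \<le> a i}"
    define M where "M = {i\<in>{1..n}. x \<le> b i}"
    define I where "I = K \<union> (J \<inter> M)"
    have nK: "x \<le> - a i" if "i \<in> {1..n}" "i \<notin> K" for i
      using dec that K_def by auto
    have nM: "x \<le> - b i" if "i \<in> {1..n}" "i \<notin> M" for i
      using dec that M_def by auto
    have KM: "K \<subseteq> M"
    proof
      fix i assume i: "i \<in> K"
      then have "i \<in> {1..n}" "x \<le> a i" by (auto simp: K_def)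
      moreover have "a i \<le> b i" using ab[OF \<open>i \<in> {1..n}\<close>] by simp
      ultimately show "i \<in> M" unfolding M_def using order_trans by blast
    qed
    have I_sub: "I \<subseteq> {1..n}" using J unfolding I_def K_def M_def by auto
    have rem: "finite R \<Longrightarrow> R \<inter> M = {} \<Longrightarrow> R \<subseteq> {1..n} \<Longrightarrow>
        \<forall>S. S \<subseteq> {1..n} \<longrightarrow> inf x (f (ehat a b S)) \<le> f (ehat a b (S - R))" for R
    proof (induction R rule: finite_induct)
      case empty then show ?case by simp
    next
      case (insert k R)
      show ?case
      proof (intro allI impI)
        fix S assume S: "S \<subseteq> {1..n}"
        have k: "k \<in> {1..n}" "k \<notin> M" using insert by auto
        have T: "S - R \<subseteq> {1..n}" using S by auto
        have c: "f (ehat a b (S - R)) \<le> sup (f (ehat a b (S - R - {k}))) (b k)"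
          using f_cond[OF T k(1)] by blast
        have xb: "x \<le> - b k" using nM k by auto
        have "inf x (f (ehat a b (S - R))) \<le> f (ehat a b (S - R - {k}))"
        proof -
          have "inf x (f (ehat a b (S - R))) \<le> inf (- b k) (sup (f (ehat a b (S - R - {k}))) (b k))"
            using xb c by (meson inf_mono)
          also have "\<dots> \<le> f (ehat a b (S - R - {k}))"
            by (simp add: inf_sup_distrib1)
          finally show ?thesis .
        qed
        moreover have "inf x (f (ehat a b S)) \<le> inf x (f (ehat a b (S - R)))"
          using insert.IH insert.prems S by auto
        ultimately have "inf x (f (ehat a b S)) \<le> f (ehat a b (S - R - {k}))"
          by (meson inf_le1 le_inf_iff order_trans)
        moreover have "S - R - {k} = S - insert k R" by auto
        ultimately show "inf x (f (ehat a b S)) \<le> f (ehat a b (S - insert k R))" by simp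
      qed
    qed
    have JK: "J \<union> K \<subseteq> {1..n}" using J K_def by auto
    have "inf x (f (ehat a b (J \<union> K))) \<le> f (ehat a b ((J \<union> K) - (J - M)))"
    proof -
      have fJ: "finite (J - M)" using finite_subset[OF J finite_atLeastAtMost] by simp
      have r: "\<forall>S. S \<subseteq> {1..n} \<longrightarrow> inf x (f (ehat a b S)) \<le> f (ehat a b (S - (J - M)))"
        by (rule rem[OF fJ]) (use J in auto)
      show ?thesis using r JK by blast
    qed
    moreover have "(J \<union> K) - (J - M) = I" using KM unfolding I_def by auto
    moreover have "f (ehat a b J) \<le> f (ehat a b (J \<union> K))" using f_mono JK by auto
    ultimately have fI: "inf x (f (ehat a b J)) \<le> f (ehat a b I)"
      by (metis inf_mono order_refl order_trans)
    have m1: "x \<le> big_meet ({1..n} - I) (\<lambda>i. - a i)"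
      by (rule big_meet_ge) (auto simp: I_def intro: nK)
    have m2: "x \<le> big_meet I (ehat a b J)"
    proof (rule big_meet_ge)
      show "finite I" using I_sub finite_subset by blast
    next
      fix i assume i: "i \<in> I"
      show "x \<le> ehat a b J i"
      proof (cases "i \<in> K")
        case True
        then have i1: "i \<in> {1..n}" and xa: "x \<le> a i" by (auto simp: K_def)
        have "a i \<le> b i" using ab[OF i1] by simp
        then have "x \<le> b i" using xa by (rule order_trans[rotated])
        then show ?thesis using xa by (simp add: ehat_def)
      next
        case False
        then have "i \<in> J" "x \<le> b i" using i I_def M_def by auto
        then show ?thesis by (simp add: ehat_def)
      qed
    qed
    have "inf x (f (ehat a b J)) \<le> inf (cminus n a b f I) (big_meet I (ehat a b J))"
      unfolding cminus_def using fI m1 m2 by (meson inf.coboundedI1 le_inf_iff)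
    also have "\<dots> \<le> ?P" unfolding pminus_def
      by (rule big_join_ge[where g = "\<lambda>I. inf (cminus n a b f I) (big_meet I (ehat a b J))"])
         (use I_sub in auto)
    finally have "inf x (f (ehat a b J)) \<le> ?P" .
    then show ?thesis by (simp add: shunt1)
  qed
  have "top \<le> sup (- f (ehat a b J)) ?P"
  proof -
    have fC: "finite ?C" by simp
    show ?thesis
      by (rule decide_split[OF fC, rule_format]) (rule key, blast)
  qed
  then have "inf top (f (ehat a b J)) \<le> ?P" by (simp only: shunt1)
  then show "f (ehat a b J) \<le> ?P" by simp
qed

end
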